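(* Let $I$ be an inverse semigroup [respectively, inverse monoid] generated as a semigroup [monoid] by a (not necessarily finite) set $\Sigma$, and let $L$ be the idempotent problem of $I$ with respect to $\Sigma$. Then the map sending each element $s\in I$ to the $\equiv_L$-class of any word over $\Sigma$ representing $s$ is a well-defined, surjective, idempotent-pure morphism from $I$ onto the syntactic semigroup $M^+(L)$ [respectively, onto the syntactic monoid $M(L)$]. Moreover, its kernel is the greatest idempotent-pure congruence on $I$. *)

theory Defs
  imports Main
begin

definition idem :: "('a \<Rightarrow> 'a \<Rightarrow> 'a) \<Rightarrow> 'a \<Rightarrow> bool" where
  "idem mult x \<longleftrightarrow> mult x x = x"

definition semigroup_on :: "'a set \<Rightarrow> ('a \<Rightarrow> 'a \<Rightarrow> 'a) \<Rightarrow> bool" where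
  "semigroup_on S mult \<longleftrightarrow>
     (\<forall>x\<in>S. \<forall>y\<in>S. mult x y \<in> S) \<and>
     (\<forall>x\<in>S. \<forall>y\<in>S. \<forall>z\<in>S. mult (mult x y) z = mult x (mult y z))"

definition inverse_semigroup :: "'a set \<Rightarrow> ('a \<Rightarrow> 'a \<Rightarrow> 'a) \<Rightarrow> bool" where
  "inverse_semigroup S mult \<longleftrightarrow> semigroup_on S mult \<and>
     (\<forall>x\<in>S. \<exists>!y. y \<in> S \<and> mult (mult x y) x = x \<and> mult (mult y x) y = y)"

definition inverse_monoid :: "'a set \<Rightarrow> ('a \<Rightarrow> 'a \<Rightarrow> 'a) \<Rightarrow> 'a \<Rightarrow> bool" where
  "inverse_monoid S mult one \<longleftrightarrow> inverse_semigroup S mult \<and> one \<in> S \<and>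
     (\<forall>x\<in>S. mult one x = x \<and> mult x one = x)"

fun evalw :: "('a \<Rightarrow> 'a \<Rightarrow> 'a) \<Rightarrow> 'a list \<Rightarrow> 'a" where
  "evalw mult [x] = x"
| "evalw mult (x # y # w) = mult x (evalw mult (y # w))"
| "evalw mult [] = undefined"

definition evalm :: "('a \<Rightarrow> 'a \<Rightarrow> 'a) \<Rightarrow> 'a \<Rightarrow> 'a list \<Rightarrow> 'a" where
  "evalm mult one w = foldr mult w one"

definition words_ne :: "'b set \<Rightarrow> 'b list set" where
  "words_ne \<Sigma> = {w. w \<noteq> [] \<and> set w \<subseteq> \<Sigma>}"

definition words :: "'b set \<Rightarrow> 'b list set" where
  "words \<Sigma> = {w. set w \<subseteq> \<Sigma>}"

definition idempotent_problem ::
    "'b list set \<Rightarrow> ('b list \<Rightarrow> 'a) \<Rightarrow> ('a \<Rightarrow> 'a \<Rightarrow> 'a) \<Rightarrow> 'b list set" where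
  "idempotent_problem W ev mult = {w \<in> W. idem mult (ev w)}"

definition syn_equiv :: "'b set \<Rightarrow> 'b list set \<Rightarrow> 'b list \<Rightarrow> 'b list \<Rightarrow> bool" where
  "syn_equiv \<Sigma> L u v \<longleftrightarrow>
     (\<forall>x y. set x \<subseteq> \<Sigma> \<longrightarrow> set y \<subseteq> \<Sigma> \<longrightarrow> (x @ u @ y \<in> L \<longleftrightarrow> x @ v @ y \<in> L))"

definition syn_rel :: "'b list set \<Rightarrow> 'b set \<Rightarrow> 'b list set \<Rightarrow> ('b list \<times> 'b list) set" where
  "syn_rel W \<Sigma> L = {(u, v). u \<in> W \<and> v \<in> W \<and> syn_equiv \<Sigma> L u v}"

text \<open>Syntactic semigroup/monoid: carrier W // syn_rel W \<Sigma> L, product [u][v] = [uv].\<close>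
definition syn_mult ::
    "'b list set \<Rightarrow> 'b set \<Rightarrow> 'b list set \<Rightarrow> 'b list set \<Rightarrow> 'b list set \<Rightarrow> 'b list set" where
  "syn_mult W \<Sigma> L C D = syn_rel W \<Sigma> L `` {(SOME u. u \<in> C) @ (SOME v. v \<in> D)}"

definition canon_map ::
    "'b list set \<Rightarrow> ('b list \<Rightarrow> 'a) \<Rightarrow> 'b set \<Rightarrow> 'b list set \<Rightarrow> 'a \<Rightarrow> 'b list set" where
  "canon_map W ev \<Sigma> L s = syn_rel W \<Sigma> L `` {SOME w. w \<in> W \<and> ev w = s}"

definition congruence_on :: "'a set \<Rightarrow> ('a \<Rightarrow> 'a \<Rightarrow> 'a) \<Rightarrow> ('a \<times> 'a) set \<Rightarrow> bool" where
  "congruence_on S mult \<rho> \<longleftrightarrow> equiv S \<rho> \<and>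
     (\<forall>s t u. (s, t) \<in> \<rho> \<longrightarrow> u \<in> S \<longrightarrow>
        (mult u s, mult u t) \<in> \<rho> \<and> (mult s u, mult t u) \<in> \<rho>)"

definition idempotent_pure_rel :: "('a \<Rightarrow> 'a \<Rightarrow> 'a) \<Rightarrow> ('a \<times> 'a) set \<Rightarrow> bool" where
  "idempotent_pure_rel mult \<rho> \<longleftrightarrow> (\<forall>e s. (e, s) \<in> \<rho> \<longrightarrow> idem mult e \<longrightarrow> idem mult s)"

definition greatest_idpure_congruence :: "'a set \<Rightarrow> ('a \<Rightarrow> 'a \<Rightarrow> 'a) \<Rightarrow> ('a \<times> 'a) set \<Rightarrow> bool" where
  "greatest_idpure_congruence S mult \<rho> \<longleftrightarrow>
     congruence_on S mult \<rho> \<and> idempotent_pure_rel mult \<rho> \<and>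
     (\<forall>\<sigma>. congruence_on S mult \<sigma> \<and> idempotent_pure_rel mult \<sigma> \<longrightarrow> \<sigma> \<subseteq> \<rho>)"

definition canonical_morphism_props ::
    "'a set \<Rightarrow> ('a \<Rightarrow> 'a \<Rightarrow> 'a) \<Rightarrow> 'b set \<Rightarrow> 'b list set \<Rightarrow> ('b list \<Rightarrow> 'a) \<Rightarrow> bool" where
  "canonical_morphism_props S mult \<Sigma> W ev \<longleftrightarrow>
    (let L = idempotent_problem W ev mult;
         R = syn_rel W \<Sigma> L;
         \<phi> = canon_map W ev \<Sigma> L in
      \<comment> \<open>well-defined: words representing the same element are syntactically equivalent\<close>
      (\<forall>u\<in>W. \<forall>v\<in>W. ev u = ev v \<longrightarrow> (u, v) \<in> R) \<and>
      (\<forall>w\<in>W. \<phi> (ev w) = R `` {w}) \<and>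
      \<comment> \<open>maps S onto the syntactic semigroup/monoid\<close>
      \<phi> ` S = W // R \<and>
      \<comment> \<open>morphism\<close>
      (\<forall>s\<in>S. \<forall>t\<in>S. \<phi> (mult s t) = syn_mult W \<Sigma> L (\<phi> s) (\<phi> t)) \<and>
      \<comment> \<open>idempotent-pure\<close>
      (\<forall>s\<in>S. syn_mult W \<Sigma> L (\<phi> s) (\<phi> s) = \<phi> s \<longrightarrow> idem mult s) \<and>
      \<comment> \<open>kernel is the greatest idempotent-pure congruence\<close>
      greatest_idpure_congruence S mult {(s, t). s \<in> S \<and> t \<in> S \<and> \<phi> s = \<phi> t})"

end

theory Submission imports Defs begin

definition oapp :: "('a\<Rightarrow>'a\<Rightarrow>'a) \<Rightarrow> 'a option \<Rightarrow> 'a \<Rightarrow> 'a" where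
  "oapp mult a s = (case a of None \<Rightarrow> s | Some c \<Rightarrow> mult c s)"
definition oappr :: "('a\<Rightarrow>'a\<Rightarrow>'a) \<Rightarrow> 'a \<Rightarrow> 'a option \<Rightarrow> 'a" where
  "oappr mult s b = (case b of None \<Rightarrow> s | Some c \<Rightarrow> mult s c)"
definition Syn :: "'a set \<Rightarrow> ('a\<Rightarrow>'a\<Rightarrow>'a) \<Rightarrow> 'a \<Rightarrow> 'a \<Rightarrow> bool" where
  "Syn S mult s t \<longleftrightarrow> (\<forall>a b. set_option a \<subseteq> S \<longrightarrow> set_option b \<subseteq> S \<longrightarrow>
     (idem mult (oapp mult a (oappr mult s b)) \<longleftrightarrow> idem mult (oapp mult a (oappr mult t b))))"

lemma sg_closed: "semigroup_on S mult \<Longrightarrow> x \<in> S \<Longrightarrow> y \<in> S \<Longrightarrow> mult x y \<in> S"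
  by (simp add: semigroup_on_def)
lemma sg_assoc: "semigroup_on S mult \<Longrightarrow> x \<in> S \<Longrightarrow> y \<in> S \<Longrightarrow> z \<in> S \<Longrightarrow>
   mult (mult x y) z = mult x (mult y z)"
  by (simp add: semigroup_on_def)

lemma inv_ex: "inverse_semigroup S mult \<Longrightarrow> x \<in> S \<Longrightarrow>
   \<exists>y. y \<in> S \<and> mult (mult x y) x = x \<and> mult (mult y x) y = y"
  unfolding inverse_semigroup_def by blast

lemma inv_uniq: "inverse_semigroup S mult \<Longrightarrow> x \<in> S \<Longrightarrow>
   y1 \<in> S \<Longrightarrow> mult (mult x y1) x = x \<Longrightarrow> mult (mult y1 x) y1 = y1 \<Longrightarrow>
   y2 \<in> S \<Longrightarrow> mult (mult x y2) x = x \<Longrightarrow> mult (mult y2 x) y2 = y2 \<Longrightarrow> y1 = y2"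
  unfolding inverse_semigroup_def by blast

lemma prod_idem:
  assumes inv: "inverse_semigroup S mult" and e: "e \<in> S" "idem mult e" and f: "f \<in> S" "idem mult f"
  shows "idem mult (mult e f)"
proof -
  have sg: "semigroup_on S mult" using inv by (simp add: inverse_semigroup_def)
  note cl = sg_closed[OF sg] and as = sg_assoc[OF sg]
  have ee: "mult e e = e" and ff: "mult f f = f" using e f by (auto simp: idem_def)
  have ef: "mult e f \<in> S" using cl e f by blast
  obtain x where x: "x \<in> S" "mult (mult (mult e f) x) (mult e f) = mult e f"
    "mult (mult x (mult e f)) x = x" using inv_ex[OF inv ef] by blast
  have x1: "mult e (mult f (mult x (mult e f))) = mult e f" using x(2) e f x by (simp add: as cl)
  have x2: "mult x (mult e (mult f x)) = x" using x(3) e f x by (simp add: as cl)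
  define y where "y = mult f (mult x e)"
  have y: "y \<in> S" using x e f by (simp add: y_def cl)
  have ee': "mult e (mult e z) = mult e z" if "z \<in> S" for z
  proof -
    have "mult e (mult e z) = mult (mult e e) z" using that e by (simp add: as)
    thus ?thesis using ee by simp
  qed
  have ff': "mult f (mult f z) = mult f z" if "z \<in> S" for z
  proof -
    have "mult f (mult f z) = mult (mult f f) z" using that f by (simp add: as)
    thus ?thesis using ff by simp
  qed
  have y1: "mult (mult (mult e f) y) (mult e f) = mult e f"
    using x e f x1 by (simp add: y_def as cl ee' ff' ee)
  have x2': "mult x (mult e (mult f (mult x z))) = mult x z" if "z \<in> S" for z
  proof -
    have "mult x (mult e (mult f (mult x z))) = mult (mult x (mult e (mult f x))) z"
      using that x(1) e(1) f(1) by (simp add: as cl)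
    thus ?thesis using x2 by simp
  qed
  have y2: "mult (mult y (mult e f)) y = y"
    using x e f by (simp add: y_def as cl ee' ff' ee x2')
  have yx: "y = x" using inv_uniq[OF inv ef y y1 y2 x(1) x(2) x(3)] .
  have xx: "mult x x = x"
  proof -
    have "mult y y = y" using x e f by (simp add: y_def as cl x2')
    thus ?thesis using yx by simp
  qed
  have xxx: "mult (mult x x) x = x" using xx by simp
  have "mult e f = x"
    using inv_uniq[OF inv x(1) ef x(3) x(2) x(1) xxx xxx] .
  thus ?thesis using xx by (simp add: idem_def)
qed

lemma syn_sq_idem:
  assumes inv: "inverse_semigroup S mult" and s: "s \<in> S" and syn: "Syn S mult (mult s s) s"
  shows "idem mult s"
proof -
  have sg: "semigroup_on S mult" using inv by (simp add: inverse_semigroup_def)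
  note cl = sg_closed[OF sg] and as = sg_assoc[OF sg]
  obtain t where t: "t \<in> S" "mult (mult s t) s = s" "mult (mult t s) t = t" using inv_ex[OF inv s] by blast
  have t1: "mult s (mult t s) = s" "mult t (mult s t) = t" using t s by (simp_all add: as)
  have ie: "idem mult (mult t s)" unfolding idem_def using t s t1 by (simp add: as cl)
  have if': "idem mult (mult s s')" if "s' = t" for s' unfolding idem_def using t s t1 that by (simp add: as cl)
  have P1: "idem mult (mult (mult t s) (mult s t))"
    using prod_idem[OF inv _ ie _ if'] t s cl by blast
  have P2: "mult (mult t s) (mult s t) = oapp mult (Some t) (oappr mult (mult s s) (Some t))"
    using t s by (simp add: oapp_def oappr_def as cl)
  have "idem mult (oapp mult (Some t) (oappr mult s (Some t)))"
  proof -
    have "idem mult (oapp mult (Some t) (oappr mult (mult s s) (Some t))) \<longleftrightarrow>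
          idem mult (oapp mult (Some t) (oappr mult s (Some t)))"
      using syn t unfolding Syn_def by (metis option.set(2) empty_subsetI insert_subset)
    thus ?thesis using P1 P2 by simp
  qed
  hence it: "idem mult t" using t1 by (simp add: oapp_def oappr_def)
  hence ttt: "mult (mult t t) t = t" by (simp add: idem_def)
  have "s = t" using inv_uniq[OF inv t(1) s t(3) t(2) t(1) ttt ttt] .
  thus ?thesis using it by simp
qed


lemma Syn_refl: "Syn S mult s s" by (simp add: Syn_def)
lemma Syn_sym: "Syn S mult s t \<Longrightarrow> Syn S mult t s" by (simp add: Syn_def)
lemma Syn_trans: "Syn S mult s t \<Longrightarrow> Syn S mult t u \<Longrightarrow> Syn S mult s u" by (simp add: Syn_def)

lemma oappr_S: "semigroup_on S mult \<Longrightarrow> s \<in> S \<Longrightarrow> set_option b \<subseteq> S \<Longrightarrow> oappr mult s b \<in> S"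
  by (cases b) (auto simp: oappr_def sg_closed)
lemma oapp_S: "semigroup_on S mult \<Longrightarrow> s \<in> S \<Longrightarrow> set_option b \<subseteq> S \<Longrightarrow> oapp mult b s \<in> S"
  by (cases b) (auto simp: oapp_def sg_closed)

lemma Syn_left:
  assumes sg: "semigroup_on S mult" and st: "s \<in> S" "t \<in> S" "c \<in> S" and syn: "Syn S mult s t"
  shows "Syn S mult (mult c s) (mult c t)"
  unfolding Syn_def
proof (intro allI impI)
  fix a b assume a: "set_option a \<subseteq> S" and b: "set_option b \<subseteq> S"
  have e: "oapp mult a (oappr mult (mult c z) b) = oapp mult (Some (oapp mult a c)) (oappr mult z b)"
    if "z \<in> S" for z
    using a b that st(3) by (cases a; cases b) (auto simp: oapp_def oappr_def sg_assoc[OF sg] sg_closed[OF sg])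
  have "set_option (Some (oapp mult a c)) \<subseteq> S" using oapp_S[OF sg st(3) a] by simp
  then show "idem mult (oapp mult a (oappr mult (mult c s) b)) = idem mult (oapp mult a (oappr mult (mult c t) b))"
    using syn b unfolding Syn_def e[OF st(1)] e[OF st(2)] by blast
qed

lemma Syn_right:
  assumes sg: "semigroup_on S mult" and st: "s \<in> S" "t \<in> S" "c \<in> S" and syn: "Syn S mult s t"
  shows "Syn S mult (mult s c) (mult t c)"
  unfolding Syn_def
proof (intro allI impI)
  fix a b assume a: "set_option a \<subseteq> S" and b: "set_option b \<subseteq> S"
  have e: "oapp mult a (oappr mult (mult z c) b) = oapp mult a (oappr mult z (Some (oappr mult c b)))"
    if "z \<in> S" for z
    using a b that st(3) by (cases a; cases b) (auto simp: oapp_def oappr_def sg_assoc[OF sg] sg_closed[OF sg])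
  have "set_option (Some (oappr mult c b)) \<subseteq> S" using oappr_S[OF sg st(3) b] by simp
  then show "idem mult (oapp mult a (oappr mult (mult s c) b)) = idem mult (oapp mult a (oappr mult (mult t c) b))"
    using syn a unfolding Syn_def e[OF st(1)] e[OF st(2)] by blast
qed

lemma Syn_mult:
  assumes sg: "semigroup_on S mult" and S: "s \<in> S" "s' \<in> S" "t \<in> S" "t' \<in> S"
    and "Syn S mult s s'" "Syn S mult t t'"
  shows "Syn S mult (mult s t) (mult s' t')"
  using Syn_trans[OF Syn_right[OF sg S(1,2,3)] Syn_left[OF sg S(3,4,2)]] assms by blast

lemma generic:
  fixes \<Sigma> :: "'b set" and W :: "'b list set" and ev :: "'b list \<Rightarrow> 'a"
  assumes inv: "inverse_semigroup S mult"
    and WS: "\<And>w. w \<in> W \<Longrightarrow> set w \<subseteq> \<Sigma>"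
    and ctx: "\<And>x. set x \<subseteq> \<Sigma> \<Longrightarrow> x = [] \<or> x \<in> W"
    and app: "\<And>u v. u \<in> W \<Longrightarrow> v \<in> W \<Longrightarrow> u @ v \<in> W"
    and evS: "\<And>u. u \<in> W \<Longrightarrow> ev u \<in> S"
    and hom: "\<And>u v. u \<in> W \<Longrightarrow> v \<in> W \<Longrightarrow> ev (u @ v) = mult (ev u) (ev v)"
    and surj: "S = ev ` W"
  shows "canonical_morphism_props S mult \<Sigma> W ev"
proof -
  have sg: "semigroup_on S mult" using inv by (simp add: inverse_semigroup_def)
  define L where "L = idempotent_problem W ev mult"
  define R where "R = syn_rel W \<Sigma> L"
  define \<phi> where "\<phi> = canon_map W ev \<Sigma> L"
  have ctxW: "x @ u @ y \<in> W" if "set x \<subseteq> \<Sigma>" "set y \<subseteq> \<Sigma>" "u \<in> W" for x u y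
  proof -
    have "u @ y \<in> W" using ctx[OF that(2)] app that(3) by auto
    thus ?thesis using ctx[OF that(1)] app by auto
  qed
  have key: "syn_equiv \<Sigma> L u v \<longleftrightarrow> Syn S mult (ev u) (ev v)" if uv: "u \<in> W" "v \<in> W" for u v
  proof
    assume H: "syn_equiv \<Sigma> L u v"
    show "Syn S mult (ev u) (ev v)" unfolding Syn_def
    proof (intro allI impI)
      fix a b assume a: "set_option a \<subseteq> S" and b: "set_option b \<subseteq> S"
      obtain x where x: "x \<in> W \<or> x = []" "a = None \<longrightarrow> x = []"
        "\<And>z. z \<in> W \<Longrightarrow> ev (x @ z) = oapp mult a (ev z)"
      proof (cases a)
        case None thus ?thesis using that[of "[]"] by (simp add: oapp_def)
      next
        case (Some c)
        then obtain x where "x \<in> W" "ev x = c" using a surj by auto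
        thus ?thesis using that[of x] Some hom by (simp add: oapp_def)
      qed
      obtain y where y: "y \<in> W \<or> y = []"
        "\<And>z. z \<in> W \<Longrightarrow> ev (z @ y) = oappr mult (ev z) b"
      proof (cases b)
        case None thus ?thesis using that[of "[]"] by (simp add: oappr_def)
      next
        case (Some c)
        then obtain y where "y \<in> W" "ev y = c" using b surj by auto
        thus ?thesis using that[of y] Some hom by (simp add: oappr_def)
      qed
      have sx: "set x \<subseteq> \<Sigma>" and sy: "set y \<subseteq> \<Sigma>" using x(1) y(1) WS by auto
      have zy: "z @ y \<in> W" if "z \<in> W" for z using y(1) app that by auto
      have E: "ev (x @ z @ y) = oapp mult a (oappr mult (ev z) b)" if "z \<in> W" for z
        using x(3)[OF zy[OF that]] y(2)[OF that] by simp
      have "x @ u @ y \<in> L \<longleftrightarrow> x @ v @ y \<in> L" using H sx sy unfolding syn_equiv_def by blast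
      thus "idem mult (oapp mult a (oappr mult (ev u) b)) = idem mult (oapp mult a (oappr mult (ev v) b))"
        using ctxW[OF sx sy uv(1)] ctxW[OF sx sy uv(2)] E[OF uv(1)] E[OF uv(2)]
        by (simp add: L_def idempotent_problem_def)
    qed
  next
    assume H: "Syn S mult (ev u) (ev v)"
    show "syn_equiv \<Sigma> L u v" unfolding syn_equiv_def
    proof (intro allI impI)
      fix x y assume sx: "set x \<subseteq> \<Sigma>" and sy: "set y \<subseteq> \<Sigma>"
      define a where "a = (if x = [] then None else Some (ev x))"
      define b where "b = (if y = [] then None else Some (ev y))"
      have a: "set_option a \<subseteq> S" using ctx[OF sx] evS by (auto simp: a_def)
      have b: "set_option b \<subseteq> S" using ctx[OF sy] evS by (auto simp: b_def)
      have E: "ev (x @ z @ y) = oapp mult a (oappr mult (ev z) b)" if "z \<in> W" for z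
      proof -
        have zy: "z @ y \<in> W" and ezy: "ev (z @ y) = oappr mult (ev z) b"
          using ctx[OF sy] app[OF that] hom[OF that] that by (auto simp: b_def oappr_def)
        show ?thesis using ctx[OF sx] hom[OF _ zy] ezy by (auto simp: a_def oapp_def)
      qed
      show "x @ u @ y \<in> L \<longleftrightarrow> x @ v @ y \<in> L"
        using ctxW[OF sx sy uv(1)] ctxW[OF sx sy uv(2)] E[OF uv(1)] E[OF uv(2)] H a b
        by (simp add: L_def idempotent_problem_def Syn_def)
    qed
  qed
  have R: "(u, v) \<in> R \<longleftrightarrow> u \<in> W \<and> v \<in> W \<and> Syn S mult (ev u) (ev v)" for u v
    using key by (auto simp: R_def syn_rel_def)
  have eqv: "equiv W R"
  proof (rule equivI)
    show "refl_on W R" unfolding refl_on_def R by (simp add: Syn_refl)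
    show "R \<subseteq> W \<times> W" using R by auto
    show "sym R" unfolding sym_def R using Syn_sym[of S mult] by blast
    show "trans R" unfolding trans_def R using Syn_trans[of S mult] by blast
  qed
  define rep where "rep s = (SOME w. w \<in> W \<and> ev w = s)" for s
  have rep: "rep s \<in> W \<and> ev (rep s) = s" if "s \<in> S" for s
  proof -
    have "\<exists>w. w \<in> W \<and> ev w = s" using that surj by auto
    thus ?thesis unfolding rep_def by (rule someI_ex)
  qed
  have phi: "\<phi> s = R `` {rep s}" for s by (simp add: \<phi>_def canon_map_def R_def rep_def)
  have phimem: "z \<in> \<phi> s \<longleftrightarrow> z \<in> W \<and> Syn S mult s (ev z)" if "s \<in> S" for s z
    using rep[OF that] R unfolding phi by auto
  have F1: "\<forall>u\<in>W. \<forall>v\<in>W. ev u = ev v \<longrightarrow> (u, v) \<in> R" using R Syn_refl by auto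
  have F2: "\<forall>w\<in>W. \<phi> (ev w) = R `` {w}"
  proof
    fix w assume w: "w \<in> W"
    have "(rep (ev w), w) \<in> R" using rep[OF evS[OF w]] w F1 by auto
    thus "\<phi> (ev w) = R `` {w}" unfolding phi using equiv_class_eq[OF eqv] by blast
  qed
  have F3: "\<phi> ` S = W // R"
  proof
    show "\<phi> ` S \<subseteq> W // R" using rep unfolding phi by (auto intro: quotientI)
    show "W // R \<subseteq> \<phi> ` S"
    proof
      fix C assume "C \<in> W // R"
      then obtain w where w: "w \<in> W" "C = R `` {w}" by (auto elim: quotientE)
      thus "C \<in> \<phi> ` S" using F2 evS by (metis image_eqI)
    qed
  qed
  have F4: "\<phi> (mult s t) = syn_mult W \<Sigma> L (\<phi> s) (\<phi> t)" if st: "s \<in> S" "t \<in> S" for s t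
  proof -
    define u0 where "u0 = (SOME u. u \<in> \<phi> s)"
    define v0 where "v0 = (SOME v. v \<in> \<phi> t)"
    have "rep s \<in> \<phi> s" "rep t \<in> \<phi> t" using phimem st rep Syn_refl by auto
    hence u0: "u0 \<in> \<phi> s" and v0: "v0 \<in> \<phi> t" unfolding u0_def v0_def by (metis someI)+
    hence u0': "u0 \<in> W" "Syn S mult s (ev u0)" and v0': "v0 \<in> W" "Syn S mult t (ev v0)"
      using phimem st by auto
    have mS: "mult s t \<in> S" using sg_closed[OF sg st] .
    have "Syn S mult (mult s t) (mult (ev u0) (ev v0))"
      using Syn_mult[OF sg st(1) evS[OF u0'(1)] st(2) evS[OF v0'(1)] u0'(2) v0'(2)] .
    hence "(rep (mult s t), u0 @ v0) \<in> R"
      using R rep[OF mS] app[OF u0'(1) v0'(1)] hom[OF u0'(1) v0'(1)] by auto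
    hence "R `` {rep (mult s t)} = R `` {u0 @ v0}" using equiv_class_eq[OF eqv] by blast
    thus ?thesis unfolding phi syn_mult_def u0_def v0_def R_def by simp
  qed
  have phieq: "\<phi> s = \<phi> t \<longleftrightarrow> Syn S mult s t" if "s \<in> S" "t \<in> S" for s t
  proof -
    have "\<phi> s = \<phi> t \<longleftrightarrow> (rep s, rep t) \<in> R"
      unfolding phi using eq_equiv_class_iff[OF eqv] rep that by blast
    thus ?thesis using R rep that by auto
  qed
  have F5: "\<forall>s\<in>S. syn_mult W \<Sigma> L (\<phi> s) (\<phi> s) = \<phi> s \<longrightarrow> idem mult s"
  proof (intro ballI impI)
    fix s assume s: "s \<in> S" and h: "syn_mult W \<Sigma> L (\<phi> s) (\<phi> s) = \<phi> s"
    have "\<phi> (mult s s) = \<phi> s" using F4[OF s s] h by simp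
    hence "Syn S mult (mult s s) s" using phieq sg_closed[OF sg s s] s by blast
    thus "idem mult s" using syn_sq_idem[OF inv s] by blast
  qed
  define K where "K = {(s, t). s \<in> S \<and> t \<in> S \<and> \<phi> s = \<phi> t}"
  have K: "K = {(s, t). s \<in> S \<and> t \<in> S \<and> Syn S mult s t}"
    unfolding K_def using phieq by auto
  have F6: "greatest_idpure_congruence S mult K"
    unfolding greatest_idpure_congruence_def
  proof (intro conjI allI impI)
    show "congruence_on S mult K"
      unfolding congruence_on_def
    proof (intro conjI allI impI)
      show "equiv S K"
      proof (rule equivI)
        show "refl_on S K" unfolding K refl_on_def by (simp add: Syn_refl)
        show "K \<subseteq> S \<times> S" unfolding K by auto
        show "sym K" unfolding K sym_def using Syn_sym[of S mult] by blast
        show "trans K" unfolding K trans_def using Syn_trans[of S mult] by blast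
      qed
      fix s t u assume st: "(s, t) \<in> K" and u: "u \<in> S"
      have s: "s \<in> S" "t \<in> S" "Syn S mult s t" using st unfolding K by auto
      show "(mult u s, mult u t) \<in> K" unfolding K
        using Syn_left[OF sg s(1,2) u s(3)] sg_closed[OF sg] s u by blast
      show "(mult s u, mult t u) \<in> K" unfolding K
        using Syn_right[OF sg s(1,2) u s(3)] sg_closed[OF sg] s u by blast
    qed
    show "idempotent_pure_rel mult K"
      unfolding idempotent_pure_rel_def
    proof (intro allI impI)
      fix e s assume es: "(e, s) \<in> K" and ie: "idem mult e"
      have "Syn S mult e s" using es unfolding K by auto
      hence "idem mult (oapp mult None (oappr mult e None)) \<longleftrightarrow> idem mult (oapp mult None (oappr mult s None))"
        unfolding Syn_def by simp
      thus "idem mult s" using ie by (simp add: oapp_def oappr_def)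
    qed
    fix \<sigma> assume h: "congruence_on S mult \<sigma> \<and> idempotent_pure_rel mult \<sigma>"
    have eq: "equiv S \<sigma>" and cmp: "\<And>s t u. (s, t) \<in> \<sigma> \<Longrightarrow> u \<in> S \<Longrightarrow>
        (mult u s, mult u t) \<in> \<sigma> \<and> (mult s u, mult t u) \<in> \<sigma>"
      and ip: "\<And>e s. (e, s) \<in> \<sigma> \<Longrightarrow> idem mult e \<Longrightarrow> idem mult s"
      using h unfolding congruence_on_def idempotent_pure_rel_def by blast+
    have symm: "(t, s) \<in> \<sigma>" if "(s, t) \<in> \<sigma>" for s t
      using eq that unfolding equiv_def sym_def by blast
    have ctxs: "(oapp mult a (oappr mult s b), oapp mult a (oappr mult t b)) \<in> \<sigma>"
      if "(s, t) \<in> \<sigma>" "set_option a \<subseteq> S" "set_option b \<subseteq> S" for s t a b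
    proof -
      have "(oappr mult s b, oappr mult t b) \<in> \<sigma>"
        using that cmp by (cases b) (auto simp: oappr_def)
      thus ?thesis using that cmp by (cases a) (auto simp: oapp_def)
    qed
    show "\<sigma> \<subseteq> K"
    proof
      fix p assume p: "p \<in> \<sigma>"
      obtain s t where st: "p = (s, t)" by (cases p)
      have "s \<in> S" "t \<in> S" using eq p st unfolding equiv_def refl_on_def by auto
      moreover have "Syn S mult s t" unfolding Syn_def
      proof (intro allI impI)
        fix a b assume a: "set_option a \<subseteq> S" and b: "set_option b \<subseteq> S"
        have 1: "(oapp mult a (oappr mult s b), oapp mult a (oappr mult t b)) \<in> \<sigma>"
          using ctxs[OF _ a b] p st by simp
        have 2: "(oapp mult a (oappr mult t b), oapp mult a (oappr mult s b)) \<in> \<sigma>"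
          using symm[OF 1] .
        show "idem mult (oapp mult a (oappr mult s b)) = idem mult (oapp mult a (oappr mult t b))"
          using ip[OF 1] ip[OF 2] by blast
      qed
      ultimately show "p \<in> K" unfolding K st by simp
    qed
  qed
  show ?thesis
    unfolding canonical_morphism_props_def Let_def
    unfolding L_def[symmetric] R_def[symmetric] \<phi>_def[symmetric]
  proof (intro conjI)
    show "\<forall>s\<in>S. \<forall>t\<in>S. \<phi> (mult s t) = syn_mult W \<Sigma> L (\<phi> s) (\<phi> t)"
      using F4 by blast
    show "greatest_idpure_congruence S mult {(s, t). s \<in> S \<and> t \<in> S \<and> \<phi> s = \<phi> t}"
      using F6 unfolding K_def .
  qed (fact F1 F2 F3 F5)+
qed


lemma evalw_S: "semigroup_on S mult \<Longrightarrow> w \<noteq> [] \<Longrightarrow> set w \<subseteq> S \<Longrightarrow> evalw mult w \<in> S"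
  by (induction mult w rule: evalw.induct) (auto simp: sg_closed)

lemma evalw_app: "semigroup_on S mult \<Longrightarrow> u \<noteq> [] \<Longrightarrow> v \<noteq> [] \<Longrightarrow> set u \<subseteq> S \<Longrightarrow> set v \<subseteq> S \<Longrightarrow>
   evalw mult (u @ v) = mult (evalw mult u) (evalw mult v)"
proof (induction mult u rule: evalw.induct)
  case (1 mult x)
  then show ?case by (cases v) auto
next
  case (2 mult x y w)
  then show ?case by (simp add: sg_assoc evalw_S)
next
  case (3 mult)
  then show ?case by simp
qed

lemma foldr_S: "semigroup_on S mult \<Longrightarrow> set u \<subseteq> S \<Longrightarrow> z \<in> S \<Longrightarrow> foldr mult u z \<in> S"
  by (induction u) (auto simp: sg_closed)

lemma foldr_mult: "semigroup_on S mult \<Longrightarrow> one \<in> S \<Longrightarrow> (\<forall>x\<in>S. mult one x = x) \<Longrightarrow>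
  set u \<subseteq> S \<Longrightarrow> z \<in> S \<Longrightarrow> foldr mult u z = mult (foldr mult u one) z"
  by (induction u) (auto simp: sg_assoc foldr_S)

theorem lemma4:
  fixes S :: "'a set" and mult :: "'a \<Rightarrow> 'a \<Rightarrow> 'a" and one :: 'a and \<Sigma> :: "'a set"
  shows "(inverse_semigroup S mult \<and> \<Sigma> \<subseteq> S \<and> S = evalw mult ` words_ne \<Sigma>
            \<longrightarrow> canonical_morphism_props S mult \<Sigma> (words_ne \<Sigma>) (evalw mult))
       \<and> (inverse_monoid S mult one \<and> \<Sigma> \<subseteq> S \<and> S = evalm mult one ` words \<Sigma>
            \<longrightarrow> canonical_morphism_props S mult \<Sigma> (words \<Sigma>) (evalm mult one))"
proof (intro conjI impI)
  assume h: "inverse_semigroup S mult \<and> \<Sigma> \<subseteq> S \<and> S = evalw mult ` words_ne \<Sigma>"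
  hence inv: "inverse_semigroup S mult" and sub: "\<Sigma> \<subseteq> S" and surj: "S = evalw mult ` words_ne \<Sigma>"
    by auto
  have sg: "semigroup_on S mult" using inv by (simp add: inverse_semigroup_def)
  show "canonical_morphism_props S mult \<Sigma> (words_ne \<Sigma>) (evalw mult)"
  proof (rule generic[OF inv _ _ _ _ _ surj])
    show "set w \<subseteq> \<Sigma>" if "w \<in> words_ne \<Sigma>" for w using that by (simp add: words_ne_def)
    show "x = [] \<or> x \<in> words_ne \<Sigma>" if "set x \<subseteq> \<Sigma>" for x using that by (simp add: words_ne_def)
    show "u @ v \<in> words_ne \<Sigma>" if "u \<in> words_ne \<Sigma>" "v \<in> words_ne \<Sigma>" for u v
      using that by (simp add: words_ne_def)
    show "evalw mult u \<in> S" if "u \<in> words_ne \<Sigma>" for u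
      using that sub evalw_S[OF sg] by (auto simp: words_ne_def)
    show "evalw mult (u @ v) = mult (evalw mult u) (evalw mult v)"
      if "u \<in> words_ne \<Sigma>" "v \<in> words_ne \<Sigma>" for u v
      using that sub evalw_app[OF sg] by (auto simp: words_ne_def)
  qed
next
  assume h: "inverse_monoid S mult one \<and> \<Sigma> \<subseteq> S \<and> S = evalm mult one ` words \<Sigma>"
  hence inv: "inverse_semigroup S mult" and sub: "\<Sigma> \<subseteq> S" and surj: "S = evalm mult one ` words \<Sigma>"
    and one: "one \<in> S" "\<forall>x\<in>S. mult one x = x"
    by (auto simp: inverse_monoid_def)
  have sg: "semigroup_on S mult" using inv by (simp add: inverse_semigroup_def)
  show "canonical_morphism_props S mult \<Sigma> (words \<Sigma>) (evalm mult one)"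
  proof (rule generic[OF inv _ _ _ _ _ surj])
    show "set w \<subseteq> \<Sigma>" if "w \<in> words \<Sigma>" for w using that by (simp add: words_def)
    show "x = [] \<or> x \<in> words \<Sigma>" if "set x \<subseteq> \<Sigma>" for x using that by (simp add: words_def)
    show "u @ v \<in> words \<Sigma>" if "u \<in> words \<Sigma>" "v \<in> words \<Sigma>" for u v
      using that by (simp add: words_def)
    show "evalm mult one u \<in> S" if "u \<in> words \<Sigma>" for u
      using that sub foldr_S[OF sg] one by (auto simp: words_def evalm_def)
    show "evalm mult one (u @ v) = mult (evalm mult one u) (evalm mult one v)"
      if "u \<in> words \<Sigma>" "v \<in> words \<Sigma>" for u v
    proof -
      have u: "set u \<subseteq> S" and v: "set v \<subseteq> S" using that sub by (auto simp: words_def)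
      show ?thesis unfolding evalm_def
        using foldr_mult[OF sg one u foldr_S[OF sg v one(1)]] by simp
    qed
  qed
qed

end
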